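(* Assume the hypotheses in the context. If $(u_n)\subset\mathcal N$ satisfies $I(u_n)\to c$, then $(u_n)$ is bounded in $E$.
   Context: Let $s\in(0,1)$, $\mu\in(0,2)$. $V\in C(\mathbb{R}^2,\mathbb{R})$ satisfies (V1) $V\ge V_0>0$ and (V2) $|\{V\le M\}|<\infty$ for all $M>0$. $f$ satisfies (f1) $f\in C^1(\mathbb{R})$, $f(t)/(\exp(\alpha t^2)-1)\to0$ as $|t|\to\infty$ for all $\alpha>0$; (f2) $f(t)/t\to0$ as $t\to0$; (f3) $t\mapsto f(t)/t$ strictly increasing on $(0,\infty)$; (f4) there is $\theta>1$ with $f(t)t\ge\theta F(t)\ge0$ for all $t$; (f5) $f(t)=0$ for $t\le0$. $F(t)=\int_0^tf$. $E=\{u\in H^1(\mathbb{R}^2):\int Vu^2<\infty\}$, $\|u\|^2=\int|\nabla u|^2+\frac12\iint\frac{|u(x)-u(y)|^2}{|x-y|^{2+2s}}dxdy+\int Vu^2$ (with associated inner product $\langle\cdot,\cdot\rangle$). $I(u)=\frac12\|u\|^2-\frac12\int(|x|^{-\mu}*F(u))F(u)\,dx$, $I'(u)[v]=\langle u,v\rangle-\int(|x|^{-\mu}*F(u))f(u)v\,dx$, $\mathcal N=\{u\in E\setminus\{0\}:I'(u)[u]=0\}$, $c=\inf_{\mathcal N}I$. *)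

theory Defs
  imports "HOL-Analysis.Analysis"
begin

type_synonym R2 = "real^2"

coinductive smooth_fun :: "(R2 \<Rightarrow> real) \<Rightarrow> bool" where
  "(\<forall>x. \<phi> differentiable (at x)) \<Longrightarrow>
   (\<forall>i::2. smooth_fun (\<lambda>x. frechet_derivative \<phi> (at x) (axis i 1))) \<Longrightarrow> smooth_fun \<phi>"

definition test_fun :: "(R2 \<Rightarrow> real) \<Rightarrow> bool" where
  "test_fun \<phi> \<longleftrightarrow> smooth_fun \<phi> \<and> compact (closure {x. \<phi> x \<noteq> 0})"

definition weak_grad :: "(R2 \<Rightarrow> real) \<Rightarrow> (R2 \<Rightarrow> R2) \<Rightarrow> bool" where
  "weak_grad u g \<longleftrightarrow> g \<in> borel_measurable lborel \<and>
     (\<forall>\<phi>. test_fun \<phi> \<longrightarrow> (\<forall>i::2.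
        (\<integral>x. u x * frechet_derivative \<phi> (at x) (axis i 1) \<partial>lborel)
        = - (\<integral>x. g x $ i * \<phi> x \<partial>lborel)))"

definition H1 :: "(R2 \<Rightarrow> real) set" where
  "H1 = {u. u \<in> borel_measurable lborel \<and> integrable lborel (\<lambda>x. (u x)\<^sup>2) \<and>
            (\<exists>g. weak_grad u g \<and> integrable lborel (\<lambda>x. (norm (g x))\<^sup>2))}"

definition grad :: "(R2 \<Rightarrow> real) \<Rightarrow> R2 \<Rightarrow> R2" where
  "grad u = (SOME g. weak_grad u g \<and> integrable lborel (\<lambda>x. (norm (g x))\<^sup>2))"

definition Espace :: "(R2 \<Rightarrow> real) \<Rightarrow> (R2 \<Rightarrow> real) set" where
  "Espace V = {u \<in> H1. integrable lborel (\<lambda>x. V x * (u x)\<^sup>2)}"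

definition Einner :: "real \<Rightarrow> (R2 \<Rightarrow> real) \<Rightarrow> (R2 \<Rightarrow> real) \<Rightarrow> (R2 \<Rightarrow> real) \<Rightarrow> real" where
  "Einner s V u v =
     (\<integral>x. grad u x \<bullet> grad v x \<partial>lborel)
   + 1/2 * (\<integral>x. (\<integral>y. ((u x - u y) * (v x - v y) / (norm (x - y) powr (2 + 2 * s))) \<partial>lborel) \<partial>lborel)
   + (\<integral>x. V x * u x * v x \<partial>lborel)"

definition Enorm :: "real \<Rightarrow> (R2 \<Rightarrow> real) \<Rightarrow> (R2 \<Rightarrow> real) \<Rightarrow> real" where
  "Enorm s V u = sqrt (Einner s V u u)"

definition primF :: "(real \<Rightarrow> real) \<Rightarrow> real \<Rightarrow> real" where
  "primF f t = (if 0 \<le> t then integral {0..t} f else - integral {t..0} f)"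

definition riesz_conv :: "real \<Rightarrow> (real \<Rightarrow> real) \<Rightarrow> (R2 \<Rightarrow> real) \<Rightarrow> R2 \<Rightarrow> real" where
  "riesz_conv \<mu> f u x = (\<integral>y. (primF f (u y) / (norm (x - y) powr \<mu>)) \<partial>lborel)"

definition Ifun :: "real \<Rightarrow> real \<Rightarrow> (R2 \<Rightarrow> real) \<Rightarrow> (real \<Rightarrow> real) \<Rightarrow> (R2 \<Rightarrow> real) \<Rightarrow> real" where
  "Ifun s \<mu> V f u = 1/2 * (Enorm s V u)\<^sup>2
      - 1/2 * (\<integral>x. riesz_conv \<mu> f u x * primF f (u x) \<partial>lborel)"

definition dI :: "real \<Rightarrow> real \<Rightarrow> (R2 \<Rightarrow> real) \<Rightarrow> (real \<Rightarrow> real) \<Rightarrow> (R2 \<Rightarrow> real) \<Rightarrow> (R2 \<Rightarrow> real) \<Rightarrow> real" where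
  "dI s \<mu> V f u v = Einner s V u v
      - (\<integral>x. riesz_conv \<mu> f u x * f (u x) * v x \<partial>lborel)"

text \<open>Nehari manifold; u \<noteq> 0 in E means u is not a.e. zero.\<close>
definition Nehari :: "real \<Rightarrow> real \<Rightarrow> (R2 \<Rightarrow> real) \<Rightarrow> (real \<Rightarrow> real) \<Rightarrow> (R2 \<Rightarrow> real) set" where
  "Nehari s \<mu> V f = {u \<in> Espace V. \<not> (AE x in lborel. u x = 0) \<and> dI s \<mu> V f u u = 0}"

definition cNehari :: "real \<Rightarrow> real \<Rightarrow> (R2 \<Rightarrow> real) \<Rightarrow> (real \<Rightarrow> real) \<Rightarrow> real" where
  "cNehari s \<mu> V f = Inf (Ifun s \<mu> V f ` Nehari s \<mu> V f)"

end

theory Submission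
  imports Defs
begin

lemma key_bound:
  fixes \<theta> :: real
  assumes th: "\<theta> > 1"
    and F: "\<forall>t. f t * t \<ge> \<theta> * primF f t \<and> \<theta> * primF f t \<ge> 0"
    and N: "dI s \<mu> V f u u = 0"
  shows "Enorm s V u ^ 2 \<le> (2 * \<theta> / (\<theta> - 1)) * Ifun s \<mu> V f u \<or> Enorm s V u = 0"
proof -
  define R where "R = riesz_conv \<mu> f u"
  have Fnn: "primF f t \<ge> 0" for t
  proof -
    have "\<theta> * primF f t \<ge> 0" using F by blast
    thus ?thesis using th by (simp add: zero_le_mult_iff)
  qed
  have Rnn: "R x \<ge> 0" for x
    unfolding R_def riesz_conv_def
    by (rule integral_nonneg_AE) (auto intro!: divide_nonneg_nonneg Fnn)
  define a where "a = (\<lambda>x. R x * primF f (u x))"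
  define b where "b = (\<lambda>x. R x * f (u x) * u x)"
  have ab: "\<theta> * a x \<le> b x" for x
  proof -
    have "\<theta> * primF f (u x) \<le> f (u x) * u x" using F by blast
    hence "R x * (\<theta> * primF f (u x)) \<le> R x * (f (u x) * u x)"
      using Rnn by (rule mult_left_mono)
    thus ?thesis unfolding a_def b_def by (simp add: algebra_simps)
  qed
  have ann: "a x \<ge> 0" for x unfolding a_def using Rnn Fnn by simp
  have bnn: "b x \<ge> 0" for x using ab[of x] ann[of x] th
    by (smt (verit) mult_nonneg_nonneg)
  define A where "A = (\<integral>x. a x \<partial>lborel)"
  define B where "B = (\<integral>x. b x \<partial>lborel)"
  have Ann: "A \<ge> 0" unfolding A_def by (rule integral_nonneg_AE) (simp add: ann)
  have EB: "Einner s V u u = B"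
    using N unfolding dI_def B_def b_def R_def by simp
  have Bnn: "B \<ge> 0" unfolding B_def by (rule integral_nonneg_AE) (simp add: bnn)
  have En2: "Enorm s V u ^ 2 = B" unfolding Enorm_def EB using Bnn by simp
  have If: "Ifun s \<mu> V f u = B/2 - A/2"
    unfolding Ifun_def En2 A_def a_def R_def by simp
  have thA: "\<theta> * A \<le> B \<or> B = 0"
  proof (cases "integrable lborel b")
    case False
    thus ?thesis unfolding B_def by (simp add: not_integrable_integral_eq)
  next
    case bi: True
    show ?thesis
    proof (cases "integrable lborel a")
      case False
      hence "A = 0" unfolding A_def by (simp add: not_integrable_integral_eq)
      thus ?thesis using Bnn by simp
    next
      case True
      have "\<theta> * A = (\<integral>x. \<theta> * a x \<partial>lborel)" unfolding A_def by simp
      also have "\<dots> \<le> B" unfolding B_def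
        by (rule integral_mono) (use True bi ab in auto)
      finally show ?thesis by simp
    qed
  qed
  show ?thesis
  proof (cases "B = 0")
    case True thus ?thesis unfolding Enorm_def EB by simp
  next
    case False
    hence tA: "\<theta> * A \<le> B" using thA by simp
    have "(\<theta> - 1) * B \<le> \<theta> * B - \<theta> * A" using tA th Ann by (simp add: algebra_simps)
    hence "(\<theta> - 1) * B \<le> 2 * \<theta> * Ifun s \<mu> V f u" unfolding If by (simp add: algebra_simps)
    hence "B \<le> (2 * \<theta> / (\<theta> - 1)) * Ifun s \<mu> V f u" using th
      by (simp add: field_simps)
    thus ?thesis using En2 by simp
  qed
qed

theorem lemma3p4:
  fixes s \<mu> V0 :: real and V :: "R2 \<Rightarrow> real" and f :: "real \<Rightarrow> real"
    and u :: "nat \<Rightarrow> R2 \<Rightarrow> real"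
  assumes s: "0 < s" "s < 1"
    and mu: "0 < \<mu>" "\<mu> < 2"
    and Vcont: "continuous_on UNIV V"
    and V1: "0 < V0" "\<forall>x. V0 \<le> V x"
    and V2: "\<forall>M>0. emeasure lborel {x. V x \<le> M} < \<infinity>"
    and f1: "f C1_differentiable_on UNIV"
        "\<forall>\<alpha>>0. ((\<lambda>t. f t / (exp (\<alpha> * t\<^sup>2) - 1)) \<longlongrightarrow> 0) at_infinity"
    and f2: "((\<lambda>t. f t / t) \<longlongrightarrow> 0) (at 0)"
    and f3: "strict_mono_on {0<..} (\<lambda>t. f t / t)"
    and f4: "\<exists>\<theta>>1. \<forall>t. f t * t \<ge> \<theta> * primF f t \<and> \<theta> * primF f t \<ge> 0"
    and f5: "\<forall>t\<le>0. f t = 0"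
    and uN: "\<forall>n. u n \<in> Nehari s \<mu> V f"
    and Ic: "(\<lambda>n. Ifun s \<mu> V f (u n)) \<longlonglongrightarrow> cNehari s \<mu> V f"
  shows "\<exists>C. \<forall>n. Enorm s V (u n) \<le> C"
proof -
  obtain \<theta> where th: "\<theta> > 1" and F: "\<forall>t. f t * t \<ge> \<theta> * primF f t \<and> \<theta> * primF f t \<ge> 0"
    using f4 by blast
  have "Bseq (\<lambda>n. Ifun s \<mu> V f (u n))" using Ic by (rule convergent_imp_Bseq[OF convergentI])
  then obtain K where K: "\<And>n. norm (Ifun s \<mu> V f (u n)) \<le> K" using BseqE by blast
  define c where "c = 2 * \<theta> / (\<theta> - 1)"
  have cpos: "c > 0" unfolding c_def using th by simp
  have "Enorm s V (u n) \<le> sqrt (c * K) + 1" for n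
  proof -
    have N: "dI s \<mu> V f (u n) (u n) = 0" using uN unfolding Nehari_def by blast
    from key_bound[OF th F N] have h: "Enorm s V (u n) ^ 2 \<le> c * Ifun s \<mu> V f (u n) \<or> Enorm s V (u n) = 0"
      unfolding c_def .
    have Ik: "Ifun s \<mu> V f (u n) \<le> K" using K[of n] by simp
    show ?thesis
    proof (cases "Enorm s V (u n) = 0")
      case True
      have "K \<ge> 0" using K[of n] norm_ge_zero order_trans by blast
      thus ?thesis using True cpos by simp
    next
      case False
      hence "Enorm s V (u n) ^ 2 \<le> c * K" using h Ik cpos
        by (smt (verit) mult_left_mono)
      hence "sqrt (Enorm s V (u n) ^ 2) \<le> sqrt (c * K)" by (rule real_sqrt_le_mono)
      hence "\<bar>Enorm s V (u n)\<bar> \<le> sqrt (c * K)" by simp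
      thus ?thesis by simp
    qed
  qed
  thus ?thesis by blast
qed

end
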